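(* Let $t\ge2$ be an integer and let $\chi_t$ be as in the context. Then: (i) for every integer $n$ with $\chi_t(n)\neq 0$, the number $\frac{n^2-(2^{t+1}-3)^2}{3\cdot 2^{t+2}}$ is an integer; and (ii) for each root of unity $\zeta$, the function $n\mapsto \zeta^{\frac{n^2-(2^{t+1}-3)^2}{3\cdot 2^{t+2}}}\chi_t(n)$ (taken to be $0$ when $\chi_t(n)=0$) is periodic and has mean value zero.
   Context: Define $\chi_t:\mathbb{Z}\to\{0,\pm1\}$, periodic modulo $3\cdot2^{t+1}$, by $\chi_t(n)=1$ if $n\equiv 2^{t+1}-3$ or $3+2^{t+2}\pmod{3\cdot 2^{t+1}}$, $\chi_t(n)=-1$ if $n\equiv 2^{t+1}+3$ or $2^{t+2}-3\pmod{3\cdot2^{t+1}}$, and $\chi_t(n)=0$ otherwise. A periodic function has mean value zero if its sum over a full period is zero. *)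

theory Defs
  imports Complex_Main
begin

definition chi :: "nat \<Rightarrow> int \<Rightarrow> int" where
  "chi t n = (let M = 3 * 2^(t+1) :: int in
     if n mod M = (2^(t+1) - 3) mod M \<or> n mod M = (3 + 2^(t+2)) mod M then 1
     else if n mod M = (2^(t+1) + 3) mod M \<or> n mod M = (2^(t+2) - 3) mod M then -1
     else 0)"

text \<open>The exponent (n^2 - (2^(t+1)-3)^2) / (3 * 2^(t+2)) (an integer when chi t n \<noteq> 0).\<close>
definition expo :: "nat \<Rightarrow> int \<Rightarrow> int" where
  "expo t n = (n^2 - (2^(t+1) - 3)^2) div (3 * 2^(t+2))"

definition root_of_unity :: "complex \<Rightarrow> bool" where
  "root_of_unity z \<longleftrightarrow> (\<exists>k::nat. k > 0 \<and> z ^ k = 1)"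

definition periodic_mean_zero :: "(int \<Rightarrow> complex) \<Rightarrow> bool" where
  "periodic_mean_zero f \<longleftrightarrow>
     (\<exists>p::int. p > 0 \<and> (\<forall>n. f (n + p) = f n) \<and> (\<Sum>n\<in>{0..<p}. f n) = 0)"

end

theory Submission
  imports Defs
begin

lemma two_pow_odd: "(k::nat) > 0 \<Longrightarrow> \<exists>s m. k = 2^s * m \<and> odd m"
proof (induction k rule: less_induct)
  case (less k)
  show ?case
  proof (cases "even k")
    case True
    then obtain j where j: "k = 2 * j" by blast
    with less.prems have "j < k" "j > 0" by auto
    with less.IH obtain s m where "j = 2^s * m" "odd m" by blast
    with j have "k = 2^(Suc s) * m" by simp
    with \<open>odd m\<close> show ?thesis by blast
  next
    case False
    then have "k = 2^0 * k" by simp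
    with False show ?thesis by blast
  qed
qed

lemma chi_alt:
  assumes "N = (2::int)^(t+1)" "M = 3*N"
  shows "chi t n = (if M dvd n-(N-3) \<or> M dvd n-(2*N+3) then 1
     else if M dvd n - (N+3) \<or> M dvd n-(2*N-3) then -1 else 0)"
proof -
  have e: "(2::int)^(t+2) = 2*N" using assms by simp
  have c: "(3::int) + 2*N = 2*N+3" by simp
  show ?thesis unfolding chi_def Let_def e c
    using assms by (simp only: mod_eq_dvd_iff flip: assms)
qed

lemma sq_lemma:
  fixes M n X :: int
  assumes "even M" "M dvd n - X"
  shows "2*M dvd n^2 - X^2"
proof -
  obtain q where q: "n - X = M*q" using assms(2) by blast
  obtain r where r: "M = 2*r" using assms(1) by blast
  have "n = X + M*q" using q by simp
  then have "n^2 - X^2 = 2*M*(X*q + r*q^2)" using r by (simp add: power2_eq_square algebra_simps)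
  then show ?thesis by simp
qed

lemma powi_cong:
  fixes z :: complex
  assumes "k > 0" "z^k = 1" "int k dvd i - j"
  shows "z powi i = z powi j"
proof -
  have z0: "z \<noteq> 0" using assms by (metis power_0_left zero_neq_one not_gr0)
  obtain q where q: "i = j + int k * q" using assms(3) by (metis add.commute diff_add_cancel dvd_def)
  have "z powi i = z powi j * (z powi int k) powi q"
    unfolding q using z0 by (simp add: power_int_add power_int_mult)
  also have "z powi int k = 1" using assms(2) by (simp add: power_int_of_nat)
  finally show ?thesis by simp
qed

theorem proposition2p2:
  fixes t :: nat
  assumes "t \<ge> 2"
  shows "(\<forall>n::int. chi t n \<noteq> 0 \<longrightarrow> (3 * 2^(t+2)) dvd (n^2 - (2^(t+1) - 3)^2))
    \<and> (\<forall>\<zeta>::complex. root_of_unity \<zeta> \<longrightarrow>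
         periodic_mean_zero (\<lambda>n. if chi t n = 0 then 0
                                   else \<zeta> powi (expo t n) * of_int (chi t n)))"
proof -
  define N :: int where "N = 2^(t+1)"
  define M :: int where "M = 3*N"
  have N4: "N \<ge> 8"
  proof -
    have "(2::int)^3 \<le> 2^(t+1)" by (rule power_increasing) (use assms in auto)
    then show ?thesis unfolding N_def by simp
  qed
  have evM: "even M" unfolding M_def N_def by simp
  have e6: "(3::int) * 2^(t+2) = 2*M" unfolding M_def N_def by simp
  have ca: "chi t n = (if M dvd n-(N-3) \<or> M dvd n-(2*N+3) then 1
     else if M dvd n - (N+3) \<or> M dvd n-(2*N-3) then -1 else 0)" for n
    by (rule chi_alt) (auto simp: N_def M_def)
  have ndv: "\<not> M dvd z" if "z \<noteq> 0" "\<bar>z\<bar> < M" for z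
    using that zdvd_imp_le[of M "\<bar>z\<bar>"] by auto
  have part1: "2*M dvd n^2 - (N-3)^2" if "chi t n \<noteq> 0" for n
  proof -
    have "M dvd n-(N-3) \<or> M dvd n-(2*N+3) \<or> M dvd n - (N+3) \<or> M dvd n-(2*N-3)"
      using that ca[of n] by (auto split: if_splits)
    moreover have "2*M dvd n^2 - (N-3)^2" if "M dvd n - (N-3)"
      using sq_lemma[OF evM that] .
    moreover have "2*M dvd n^2 - (N-3)^2" if h: "M dvd n - (2*N+3)"
    proof -
      have eq: "n - (-(N-3)) = (n - (2*N+3)) + M" unfolding M_def by simp
      have "M dvd n - (-(N-3))" by (subst eq) (use h in simp)
      from sq_lemma[OF evM this] show ?thesis by (metis power2_minus)
    qed
    moreover have "2*M dvd n^2 - (N-3)^2" if h: "M dvd n - (N+3)"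
    proof -
      have "2*M dvd n^2 - (N+3)^2" using sq_lemma[OF evM h] .
      moreover have "2*M dvd (N+3)^2 - (N-3)^2" unfolding M_def
        by (simp add: power2_eq_square algebra_simps)
      ultimately have "2*M dvd (n^2 - (N+3)^2) + ((N+3)^2 - (N-3)^2)" by (rule dvd_add)
      then show ?thesis by simp
    qed
    moreover have "2*M dvd n^2 - (N-3)^2" if h: "M dvd n - (2*N-3)"
    proof -
      have eq: "n - (-(N+3)) = (n - (2*N-3)) + M" unfolding M_def by simp
      have "M dvd n - (-(N+3))" by (subst eq) (use h in simp)
      from sq_lemma[OF evM this] have "2*M dvd n^2 - (N+3)^2" by (metis power2_minus)
      moreover have "2*M dvd (N+3)^2 - (N-3)^2" unfolding M_def
        by (simp add: power2_eq_square algebra_simps)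
      ultimately have "2*M dvd (n^2 - (N+3)^2) + ((N+3)^2 - (N-3)^2)" by (rule dvd_add)
      then show ?thesis by simp
    qed
    ultimately show ?thesis by blast
  qed
  have expo_eq: "expo t n * (2*M) = n^2 - (N-3)^2" if "chi t n \<noteq> 0" for n
    using part1[OF that] unfolding expo_def e6 N_def by simp
  show ?thesis
  proof (intro conjI allI impI)
    fix n :: int assume "chi t n \<noteq> 0"
    from part1[OF this] show "(3 * 2^(t+2)) dvd (n^2 - (2^(t+1) - 3)^2)"
      unfolding e6 N_def by simp
  next
    fix \<zeta> :: complex assume "root_of_unity \<zeta>"
    then obtain k :: nat where k: "k > 0" "\<zeta>^k = 1" unfolding root_of_unity_def by blast
    define f where "f = (\<lambda>n. if chi t n = 0 then 0
                                   else \<zeta> powi (expo t n) * of_int (chi t n))"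
    obtain s m where sm: "k = 2^s * m" "odd m" using two_pow_odd[OF k(1)] by blast
    define A :: int where "A = 2^(t+2+s)"
    define B :: int where "B = 3 * int m"
    define P where "P = A * B"
    have PMk: "P = 2*M*int k" unfolding P_def A_def B_def M_def N_def sm
      by (simp add: power_add)
    have Mpos: "M > 0" using N4 unfolding M_def by simp
    have Ppos: "P > 0" unfolding PMk using Mpos k(1) by simp
    have oddB: "odd B" unfolding B_def using sm(2) by simp
    have cop: "coprime A B" unfolding A_def using oddB by (simp add: coprime_power_left_iff del: power_Suc power_add)
    obtain x y where xy: "x * A + y * B = 1" using bezout_int[of A B] cop by auto
    define u where "u = 1 - 2*y*B"
    have u1: "u + 1 = 2*x*A" unfolding u_def using xy by algebra
    have u2: "u - 1 = -2*y*B" unfolding u_def by simp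
    have NA: "N dvd A" unfolding A_def N_def by (rule le_imp_power_dvd) simp
    have Nu: "N dvd u + 1" unfolding u1 using NA by simp
    have tu: "3 dvd u - 1" unfolding u2 B_def by simp
    have Mu1: "M dvd N * (u - 1)" unfolding M_def using tu by (metis mult.commute mult_dvd_mono dvd_refl)
    have Mu2: "M dvd 3 * (u + 1)" unfolding M_def using Nu by (metis mult_dvd_mono dvd_refl)
    have uu: "u^2 - 1 = P * (-4*x*y)"
    proof -
      have "u^2 - 1 = (u-1)*(u+1)" by (simp add: power2_eq_square algebra_simps)
      then show ?thesis unfolding u1 u2 P_def by (simp add: algebra_simps)
    qed
    have MP: "M dvd P" unfolding PMk by simp
    have shift: "M dvd n - X \<longleftrightarrow> M dvd n' - X" if "M dvd n - n'" for n n' X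
    proof -
      have "n' - X = (n - X) - (n - n')" "n - X = (n' - X) + (n - n')" by simp_all
      then show ?thesis using that by (metis dvd_add dvd_diff)
    qed
    have chi_cong: "chi t n = chi t n'" if "M dvd n - n'" for n n'
      unfolding ca using shift[OF that] by simp
    have tr: "M dvd u*n - Y" if "M dvd n - X" "M dvd u*X - Y" for n X Y
    proof -
      have eq: "u*n - Y = u*(n - X) + (u*X - Y)" by (simp add: algebra_simps)
      have "M dvd u*(n - X) + (u*X - Y)" using that by (intro dvd_add dvd_mult) auto
      then show ?thesis by (simp only: eq)
    qed
    have da: "M dvd u*(N-3) - (N+3)"
    proof -
      have eq: "u*(N-3) - (N+3) = N*(u-1) - 3*(u+1)" by (simp add: algebra_simps)
      show ?thesis unfolding eq using Mu1 Mu2 by (metis dvd_add dvd_diff dvd_mult)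
    qed
    have db: "M dvd u*(2*N+3) - (2*N-3)"
    proof -
      have eq: "u*(2*N+3) - (2*N-3) = 2*(N*(u-1)) + 3*(u+1)" by (simp add: algebra_simps)
      show ?thesis unfolding eq using Mu1 Mu2 by (metis dvd_add dvd_diff dvd_mult)
    qed
    have dc: "M dvd u*(N+3) - (N-3)"
    proof -
      have eq: "u*(N+3) - (N-3) = N*(u-1) + 3*(u+1)" by (simp add: algebra_simps)
      show ?thesis unfolding eq using Mu1 Mu2 by (metis dvd_add dvd_diff dvd_mult)
    qed
    have dd: "M dvd u*(2*N-3) - (2*N+3)"
    proof -
      have eq: "u*(2*N-3) - (2*N+3) = 2*(N*(u-1)) - 3*(u+1)" by (simp add: algebra_simps)
      show ?thesis unfolding eq using Mu1 Mu2 by (metis dvd_add dvd_diff dvd_mult)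
    qed
    have MN: "M = 3*N" by (simp add: M_def)
    have distinct: "\<not> (M dvd n - X \<and> M dvd n - Y)" if "X - Y \<noteq> 0" "\<bar>X - Y\<bar> < M" for n X Y
    proof
      assume "M dvd n - X \<and> M dvd n - Y"
      then have "M dvd (n - Y) - (n - X)" by (metis dvd_diff)
      then have "M dvd X - Y" by simp
      with ndv that show False by blast
    qed
    have d1: "\<not> (M dvd n - (N+3) \<and> M dvd n - (N-3))" for n
      by (rule distinct) (use N4 MN in auto)
    have d2: "\<not> (M dvd n - (N+3) \<and> M dvd n - (2*N+3))" for n
      by (rule distinct) (use N4 MN in auto)
    have d3: "\<not> (M dvd n - (2*N-3) \<and> M dvd n - (N-3))" for n
      by (rule distinct) (use N4 MN in auto)
    have d4: "\<not> (M dvd n - (2*N-3) \<and> M dvd n - (2*N+3))" for n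
      by (rule distinct) (use N4 MN in auto)
    have chiL1: "chi t (u*n) = -1" if "chi t n = 1" for n
    proof -
      have "M dvd n-(N-3) \<or> M dvd n-(2*N+3)" using that ca[of n] by (auto split: if_splits)
      then have "M dvd u*n - (N+3) \<or> M dvd u*n-(2*N-3)" using tr da db by blast
      then show ?thesis unfolding ca[of "u*n"] using d1 d2 d3 d4 by metis
    qed
    have chiL2: "chi t (u*n) = 1" if "chi t n = -1" for n
    proof -
      have "M dvd n-(N+3) \<or> M dvd n-(2*N-3)" using that ca[of n] by (auto split: if_splits)
      then have "M dvd u*n - (N-3) \<or> M dvd u*n-(2*N+3)" using tr dc dd by blast
      then show ?thesis unfolding ca[of "u*n"] by simp
    qed
    have uun: "M dvd u*(u*n) - n" for n
    proof -
      have "u*(u*n) - n = (u^2 - 1) * n" by (simp add: power2_eq_square algebra_simps)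
      then show ?thesis unfolding uu using MP by simp
    qed
    have chi_range: "chi t n = 0 \<or> chi t n = 1 \<or> chi t n = -1" for n
      unfolding ca by simp
    have chi_neg: "chi t (u*n) = - chi t n" for n
    proof -
      consider "chi t n = 0" | "chi t n = 1" | "chi t n = -1" using chi_range by blast
      then show ?thesis
      proof cases
        case 1
        have "chi t (u*(u*n)) = chi t n" by (rule chi_cong[OF uun])
        then show ?thesis using 1 chi_range[of "u*n"] chiL1[of "u*n"] chiL2[of "u*n"] by auto
      qed (use chiL1 chiL2 in auto)
    qed
    have M0: "2*M \<noteq> 0" using Mpos by simp
    have expo_diff: "int k dvd expo t n - expo t n'"
      if "chi t n \<noteq> 0" "chi t n' \<noteq> 0" "n^2 - n'^2 = P * w" for n n' w
    proof -
      have "(expo t n - expo t n') * (2*M) = (2*M) * (int k * w)"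
        using expo_eq[OF that(1)] expo_eq[OF that(2)] that(3) unfolding PMk
        by (simp add: algebra_simps)
      then have "expo t n - expo t n' = int k * w" using M0 by simp
      then show ?thesis by simp
    qed
    have f_cong: "f n = f n'" if Pd: "P dvd n - n'" for n n'
    proof -
      have c: "chi t n = chi t n'" using chi_cong MP Pd dvd_trans by blast
      show ?thesis
      proof (cases "chi t n = 0")
        case True then show ?thesis unfolding f_def using c by simp
      next
        case False
        obtain q where q: "n - n' = P * q" using Pd by blast
        have "n^2 - n'^2 = (n - n') * (n + n')" by (simp add: power2_eq_square algebra_simps)
        then have "n^2 - n'^2 = P * (q * (n+n'))" unfolding q by simp
        from expo_diff[OF False _ this] False c
        have "\<zeta> powi expo t n = \<zeta> powi expo t n'"
          using powi_cong[OF k] by simp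
        then show ?thesis unfolding f_def using c by simp
      qed
    qed
    have f_neg: "f (u*n) = - f n" for n
    proof (cases "chi t n = 0")
      case True then show ?thesis unfolding f_def using chi_neg[of n] by simp
    next
      case False
      then have F2: "chi t (u*n) \<noteq> 0" using chi_neg[of n] by simp
      have "(u*n)^2 - n^2 = P * (-4*x*y*n^2)"
      proof -
        have "(u*n)^2 - n^2 = (u^2 - 1) * n^2" by (simp add: power2_eq_square algebra_simps)
        then show ?thesis unfolding uu by simp
      qed
      from expo_diff[OF F2 False this]
      have "\<zeta> powi expo t (u*n) = \<zeta> powi expo t n" using powi_cong[OF k] by simp
      then show ?thesis unfolding f_def using chi_neg[of n] False F2 by simp
    qed
    define g where "g n = (u*n) mod P" for n
    have g_in: "g n \<in> {0..<P}" for n unfolding g_def using Ppos by simp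
    have gg: "g (g n) = n" if "n \<in> {0..<P}" for n
    proof -
      have "g (g n) = (u * (u*n)) mod P" unfolding g_def by (simp add: mod_mult_right_eq)
      also have "u*(u*n) = n + P * (-4*x*y*n)"
      proof -
        have "u*(u*n) = n + (u^2-1)*n" by (simp add: power2_eq_square algebra_simps)
        then show ?thesis unfolding uu by simp
      qed
      finally have "g (g n) = (n + P * (-4*x*y*n)) mod P" .
      then have "g (g n) = n mod P" by (simp only: mod_mult_self2)
      then show ?thesis using that by simp
    qed
    have fg: "f (g n) = - f n" for n
    proof -
      have "P dvd g n - u*n" unfolding g_def by (simp add: mod_eq_dvd_iff[symmetric])
      then have "f (g n) = f (u*n)" by (rule f_cong)
      then show ?thesis using f_neg by simp
    qed
    have S: "(\<Sum>n\<in>{0..<P}. f n) = (\<Sum>n\<in>{0..<P}. f (g n))"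
      by (rule sum.reindex_bij_witness[of _ g g]) (use gg g_in in auto)
    also have "\<dots> = - (\<Sum>n\<in>{0..<P}. f n)" by (simp add: fg sum_negf)
    finally have "(\<Sum>n\<in>{0..<P}. f n) = 0" by simp
    moreover have "\<forall>n. f (n + P) = f n" using f_cong by simp
    ultimately show "periodic_mean_zero f" unfolding periodic_mean_zero_def using Ppos by blast
  qed
qed

end
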